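(* Let $\mathcal M$ be a structural causal model with causal diagram $G$, containing a binary treatment $X$ (values $x,x'$), a binary outcome $Y$ (values $y,y'$), and disjoint sets of discrete variables $C$ and $Z$ such that $Z\cup C$ contains no descendant of $X$ in $G$. Fix a value $c$ of $C$ with $P(c)>0$, and let $\beta,\gamma,\theta,\delta\in\mathbb R$. Define the benefit function $$f(c)=\beta P(y_x,y'_{x'}\mid c)+\gamma P(y_x,y_{x'}\mid c)+\theta P(y'_x,y'_{x'}\mid c)+\delta P(y_{x'},y'_x\mid c).$$ Let $$\sigma=\beta-\gamma-\theta+\delta,\qquad W=(\gamma-\delta)P(y_x\mid c)+\delta P(y_{x'}\mid c)+\theta P(y'_{x'}\mid c),$$ $$L=\sum_z \max\Big\{0,\ P(y_x\mid z,c)-P(y_{x'}\mid z,c),\ P(y\mid z,c)-P(y_{x'}\mid z,c),\ P(y_x\mid z,c)-P(y\mid z,c)\Big\}\,P(z\mid c),$$ $$U=\sum_z \min\Big\{P(y_x\mid z,c),\ P(y'_{x'}\mid z,c),\ P(y,x\mid z,c)+P(y',x'\mid z,c),\ P(y_x\mid z,c)-P(y_{x'}\mid z,c)+P(y,x'\mid z,c)+P(y',x\mid z,c)\Big\}\,P(z\mid c),$$ where the sums range over values $z$ of $Z$ with $P(z\mid c)>0$. Then $$W+\sigma U\le f(c)\le W+\sigma L\ \text{ if }\sigma<0,\qquad W+\sigma L\le f(c)\le W+\sigma U\ \text{ if }\sigma>0.$$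
   Context: For a value $x$ of $X$, $Y_x$ denotes the counterfactual (potential-outcome) variable "the value $Y$ would take had $X$ been set to $x$" in the structural causal model, and $y_x$ denotes the event $Y_x=y$ (similarly $y'_x$, $y_{x'}$, $y'_{x'}$). Thus $P(y_x,y'_{x'}\mid c)$ is the joint probability that $Y_x=y$ and $Y_{x'}=y'$ given $C=c$, and $P(y_x\mid z,c)$ is the probability of $Y_x=y$ given $Z=z,C=c$. Terms without subscripts such as $P(y\mid z,c)$, $P(y,x\mid z,c)$ are ordinary (observational) probabilities of the factual variables. Consistency holds: if $X=x$ then $Y_x=Y$. *)

theory Defs
  imports "HOL-Probability.Probability"
begin

text \<open>Endogenous variables have names of type 'v, values of type 'a;
  all exogenous variables are bundled into one state of type 'u with distribution a pmf.
  F v u s is the structural equation of v, given exogenous state u and values s of endogenous variables.\<close>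

definition do_eqs :: "('v \<Rightarrow> 'u \<Rightarrow> ('v \<Rightarrow> 'a) \<Rightarrow> 'a) \<Rightarrow> 'v set \<Rightarrow> ('v \<Rightarrow> 'a) \<Rightarrow> 'u \<Rightarrow> ('v \<Rightarrow> 'a) \<Rightarrow> bool" where
  "do_eqs F W w u s \<longleftrightarrow> (\<forall>v. s v = (if v \<in> W then w v else F v u s))"

definition solution :: "('v \<Rightarrow> 'u \<Rightarrow> ('v \<Rightarrow> 'a) \<Rightarrow> 'a) \<Rightarrow> 'v set \<Rightarrow> ('v \<Rightarrow> 'a) \<Rightarrow> 'u \<Rightarrow> 'v \<Rightarrow> 'a" where
  "solution F W w u = (THE s. do_eqs F W w u s)"

definition causal_edges :: "('v \<Rightarrow> 'v set) \<Rightarrow> ('v \<times> 'v) set" where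
  "causal_edges pa = {(w, v). w \<in> pa v}"

definition descendants :: "('v \<Rightarrow> 'v set) \<Rightarrow> 'v \<Rightarrow> 'v set" where
  "descendants pa X = {v. (X, v) \<in> (causal_edges pa)\<^sup>*}"

definition scm :: "('v \<Rightarrow> 'v set) \<Rightarrow> ('v \<Rightarrow> 'u \<Rightarrow> ('v \<Rightarrow> 'a) \<Rightarrow> 'a) \<Rightarrow> bool" where
  "scm pa F \<longleftrightarrow>
     (\<forall>v u s t. (\<forall>w\<in>pa v. s w = t w) \<longrightarrow> F v u s = F v u t) \<and>
     acyclic (causal_edges pa) \<and>
     (\<forall>W w u. \<exists>!s. do_eqs F W w u s)"

definition obs :: "('v \<Rightarrow> 'u \<Rightarrow> ('v \<Rightarrow> 'a) \<Rightarrow> 'a) \<Rightarrow> 'u \<Rightarrow> 'v \<Rightarrow> 'a" where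
  "obs F u = solution F {} (\<lambda>_. undefined) u"

text \<open>Counterfactual values under do(X = a): cf F X a u Y is Y_a(u).\<close>
definition cf :: "('v \<Rightarrow> 'u \<Rightarrow> ('v \<Rightarrow> 'a) \<Rightarrow> 'a) \<Rightarrow> 'v \<Rightarrow> 'a \<Rightarrow> 'u \<Rightarrow> 'v \<Rightarrow> 'a" where
  "cf F X a u = solution F {X} (\<lambda>_. a) u"

definition agree :: "('v \<Rightarrow> 'a) \<Rightarrow> 'v set \<Rightarrow> ('v \<Rightarrow> 'a) \<Rightarrow> bool" where
  "agree s S v \<longleftrightarrow> (\<forall>w\<in>S. s w = v w)"

definition Pr :: "'u pmf \<Rightarrow> ('u \<Rightarrow> bool) \<Rightarrow> real" where
  "Pr M A = measure_pmf.prob M {u. A u}"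

definition CPr :: "'u pmf \<Rightarrow> ('u \<Rightarrow> bool) \<Rightarrow> ('u \<Rightarrow> bool) \<Rightarrow> real" where
  "CPr M A B = Pr M (\<lambda>u. A u \<and> B u) / Pr M B"

end

theory Submission
  imports Defs
begin


lemma Pr_partition:
  fixes g :: "'u \<Rightarrow> 'k"
  assumes "finite S" "\<And>u. A u \<Longrightarrow> g u \<in> S"
  shows "Pr M A = (\<Sum>k\<in>S. Pr M (\<lambda>u. A u \<and> g u = k))"
proof -
  have "{u. A u} = (\<Union>k\<in>S. {u. A u \<and> g u = k})" using assms(2) by auto
  moreover have "measure_pmf.prob M (\<Union>k\<in>S. {u. A u \<and> g u = k}) = (\<Sum>k\<in>S. measure_pmf.prob M {u. A u \<and> g u = k})"
    by (rule measure_finite_Union) (auto simp: assms(1) disjoint_family_on_def measure_pmf.emeasure_finite)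
  ultimately show ?thesis by (simp add: Pr_def)
qed

lemma Pr_nonneg: "0 \<le> Pr M A" by (simp add: Pr_def)

lemma Pr_mono: "(\<And>u. A u \<Longrightarrow> B u) \<Longrightarrow> Pr M A \<le> Pr M B"
  unfolding Pr_def by (rule measure_pmf.finite_measure_mono) auto

lemma Pr_add:
  assumes "\<And>u. C u \<longleftrightarrow> A u \<or> B u" "\<And>u. A u \<Longrightarrow> B u \<Longrightarrow> False"
  shows "Pr M C = Pr M A + Pr M B"
proof -
  have "{u. C u} = {u. A u} \<union> {u. B u}" using assms(1) by auto
  moreover have "{u. A u} \<inter> {u. B u} = {}" using assms(2) by auto
  ultimately show ?thesis unfolding Pr_def by (simp add: measure_pmf.finite_measure_Union)
qed

lemma Pr_sub:
  assumes "\<And>u. A u \<Longrightarrow> B u \<or> C u"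
  shows "Pr M A \<le> Pr M B + Pr M C"
proof -
  have "Pr M A \<le> Pr M (\<lambda>u. B u \<or> C u)" using assms by (rule Pr_mono)
  also have "\<dots> \<le> Pr M B + Pr M C" unfolding Pr_def
    using measure_pmf.finite_measure_Union'[of "{u. B u}" M "{u. C u}"]
      measure_pmf.finite_measure_mono[of "{u. C u} - {u. B u}" "{u. C u}" M]
    by (simp add: Collect_disj_eq)
  finally show ?thesis .
qed

lemma CPr_nonneg: "0 \<le> CPr M A G" by (simp add: CPr_def Pr_nonneg)

lemma CPr_mono: "(\<And>u. G u \<Longrightarrow> A u \<Longrightarrow> B u) \<Longrightarrow> CPr M A G \<le> CPr M B G"
  unfolding CPr_def by (rule divide_right_mono) (auto intro!: Pr_mono simp: Pr_nonneg)

lemma CPr_add: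
  assumes "\<And>u. G u \<Longrightarrow> C u \<longleftrightarrow> A u \<or> B u" "\<And>u. G u \<Longrightarrow> A u \<Longrightarrow> B u \<Longrightarrow> False"
  shows "CPr M C G = CPr M A G + CPr M B G"
proof -
  have "Pr M (\<lambda>u. C u \<and> G u) = Pr M (\<lambda>u. A u \<and> G u) + Pr M (\<lambda>u. B u \<and> G u)"
    by (rule Pr_add) (use assms in blast)+
  then show ?thesis unfolding CPr_def by (simp add: add_divide_distrib)
qed

lemma CPr_sub:
  assumes "\<And>u. G u \<Longrightarrow> A u \<Longrightarrow> B u \<or> C u"
  shows "CPr M A G \<le> CPr M B G + CPr M C G"
proof -
  have "Pr M (\<lambda>u. A u \<and> G u) \<le> Pr M (\<lambda>u. B u \<and> G u) + Pr M (\<lambda>u. C u \<and> G u)"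
    by (rule Pr_sub) (use assms in blast)
  then have "Pr M (\<lambda>u. A u \<and> G u) / Pr M G \<le> (Pr M (\<lambda>u. B u \<and> G u) + Pr M (\<lambda>u. C u \<and> G u)) / Pr M G"
    by (rule divide_right_mono) (simp add: Pr_nonneg)
  then show ?thesis unfolding CPr_def by (simp add: add_divide_distrib)
qed

lemma CPr_sub3:
  assumes "\<And>u. G u \<Longrightarrow> A u \<Longrightarrow> B u \<or> C u \<or> D u"
  shows "CPr M A G \<le> CPr M B G + CPr M C G + CPr M D G"
proof -
  have "CPr M A G \<le> CPr M B G + CPr M (\<lambda>u. C u \<or> D u) G" by (rule CPr_sub) (use assms in blast)
  moreover have "CPr M (\<lambda>u. C u \<or> D u) G \<le> CPr M C G + CPr M D G" by (rule CPr_sub) blast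
  ultimately show ?thesis by linarith
qed

theorem theorem1:
  fixes pa :: "'v::finite \<Rightarrow> 'v set"
    and F :: "'v \<Rightarrow> 'u \<Rightarrow> ('v \<Rightarrow> 'a::finite) \<Rightarrow> 'a"
    and Pu :: "'u pmf"
    and X Y :: 'v and x x' y y' :: 'a
    and C Z :: "'v set" and c :: "'v \<Rightarrow> 'a"
    and \<beta> \<gamma> \<theta> \<delta> :: real
  assumes model: "scm pa F"
    and XY: "X \<noteq> Y"
    and bin_x: "x \<noteq> x'" "\<forall>u s. F X u s \<in> {x, x'}"
    and bin_y: "y \<noteq> y'" "\<forall>u s. F Y u s \<in> {y, y'}"
    and disj: "C \<inter> Z = {}"
    and nondesc: "(Z \<union> C) \<inter> descendants pa X = {}"
    and pos_c: "Pr Pu (\<lambda>u. agree (obs F u) C c) > 0"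
  defines "cC \<equiv> (\<lambda>u. agree (obs F u) C c)"
    and "Yx \<equiv> (\<lambda>a u. cf F X a u Y)"
    and "zc \<equiv> (\<lambda>z u. agree (obs F u) Z z \<and> agree (obs F u) C c)"
  defines "f \<equiv> \<beta> * CPr Pu (\<lambda>u. Yx x u = y \<and> Yx x' u = y') cC
              + \<gamma> * CPr Pu (\<lambda>u. Yx x u = y \<and> Yx x' u = y) cC
              + \<theta> * CPr Pu (\<lambda>u. Yx x u = y' \<and> Yx x' u = y') cC
              + \<delta> * CPr Pu (\<lambda>u. Yx x' u = y \<and> Yx x u = y') cC"
    and "\<sigma> \<equiv> \<beta> - \<gamma> - \<theta> + \<delta>"
    and "W \<equiv> (\<gamma> - \<delta>) * CPr Pu (\<lambda>u. Yx x u = y) cC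
              + \<delta> * CPr Pu (\<lambda>u. Yx x' u = y) cC
              + \<theta> * CPr Pu (\<lambda>u. Yx x' u = y') cC"
    and "Zs \<equiv> {z \<in> extensional Z. CPr Pu (\<lambda>u. agree (obs F u) Z z) cC > 0}"
  defines "L \<equiv> (\<Sum>z\<in>Zs.
              max (max 0 (CPr Pu (\<lambda>u. Yx x u = y) (zc z) - CPr Pu (\<lambda>u. Yx x' u = y) (zc z)))
                  (max (CPr Pu (\<lambda>u. obs F u Y = y) (zc z) - CPr Pu (\<lambda>u. Yx x' u = y) (zc z))
                       (CPr Pu (\<lambda>u. Yx x u = y) (zc z) - CPr Pu (\<lambda>u. obs F u Y = y) (zc z)))
              * CPr Pu (\<lambda>u. agree (obs F u) Z z) cC)"
    and "U \<equiv> (\<Sum>z\<in>Zs.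
              min (min (CPr Pu (\<lambda>u. Yx x u = y) (zc z)) (CPr Pu (\<lambda>u. Yx x' u = y') (zc z)))
                  (min (CPr Pu (\<lambda>u. obs F u Y = y \<and> obs F u X = x) (zc z)
                          + CPr Pu (\<lambda>u. obs F u Y = y' \<and> obs F u X = x') (zc z))
                       (CPr Pu (\<lambda>u. Yx x u = y) (zc z) - CPr Pu (\<lambda>u. Yx x' u = y) (zc z)
                          + CPr Pu (\<lambda>u. obs F u Y = y \<and> obs F u X = x') (zc z)
                          + CPr Pu (\<lambda>u. obs F u Y = y' \<and> obs F u X = x) (zc z)))
              * CPr Pu (\<lambda>u. agree (obs F u) Z z) cC)"
  shows "(\<sigma> < 0 \<longrightarrow> W + \<sigma> * U \<le> f \<and> f \<le> W + \<sigma> * L) \<and>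
         (\<sigma> > 0 \<longrightarrow> W + \<sigma> * L \<le> f \<and> f \<le> W + \<sigma> * U)"
  proof -
  have uniq: "\<And>W w u. \<exists>!s. do_eqs F W w u s" using model by (simp add: scm_def)
  have obs_eq: "\<And>u v. obs F u v = F v u (obs F u)"
  proof -
    fix u v
    have "do_eqs F {} (\<lambda>_. undefined) u (obs F u)"
      unfolding obs_def solution_def by (rule theI'[OF uniq])
    then show "obs F u v = F v u (obs F u)" by (simp add: do_eqs_def)
  qed
  have cf_eq: "\<And>a u. do_eqs F {X} (\<lambda>_. a) u (cf F X a u)"
    unfolding cf_def solution_def by (rule theI'[OF uniq])
  have Yrange: "\<And>a u. Yx a u = y \<or> Yx a u = y'"
  proof -
    fix a u
    have "cf F X a u Y = F Y u (cf F X a u)" using cf_eq[of a u] XY by (simp add: do_eqs_def)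
    then show "Yx a u = y \<or> Yx a u = y'" using bin_y(2) unfolding Yx_def by auto
  qed
  have Xrange: "\<And>u. obs F u X = x \<or> obs F u X = x'"
    using obs_eq bin_x(2) by auto
  have cons: "\<And>a u. obs F u X = a \<Longrightarrow> Yx a u = obs F u Y"
  proof -
    fix a u assume h: "obs F u X = a"
    have "do_eqs F {X} (\<lambda>_. a) u (obs F u)"
      unfolding do_eqs_def using h obs_eq by auto
    then have "cf F X a u = obs F u"
      unfolding cf_def solution_def using uniq by (rule the1_equality[rotated])
    then show "Yx a u = obs F u Y" by (simp add: Yx_def)
  qed
  define b where "b = (\<lambda>G. CPr Pu (\<lambda>u. Yx x u = y \<and> Yx x' u = y') G)"
  define wz where "wz = (\<lambda>z. CPr Pu (\<lambda>u. agree (obs F u) Z z) cC)"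
  have low: "max (max 0 (CPr Pu (\<lambda>u. Yx x u = y) G - CPr Pu (\<lambda>u. Yx x' u = y) G))
                  (max (CPr Pu (\<lambda>u. obs F u Y = y) G - CPr Pu (\<lambda>u. Yx x' u = y) G)
                       (CPr Pu (\<lambda>u. Yx x u = y) G - CPr Pu (\<lambda>u. obs F u Y = y) G)) \<le> b G" for G
  proof -
    have "0 \<le> b G" by (simp add: b_def CPr_nonneg)
    moreover have "CPr Pu (\<lambda>u. Yx x u = y) G \<le> b G + CPr Pu (\<lambda>u. Yx x' u = y) G"
      unfolding b_def by (rule CPr_sub) (use Yrange in metis)
    moreover have "CPr Pu (\<lambda>u. obs F u Y = y) G \<le> b G + CPr Pu (\<lambda>u. Yx x' u = y) G"
      unfolding b_def by (rule CPr_sub) (use Yrange Xrange cons in metis)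
    moreover have "CPr Pu (\<lambda>u. Yx x u = y) G \<le> b G + CPr Pu (\<lambda>u. obs F u Y = y) G"
      unfolding b_def by (rule CPr_sub) (use Yrange Xrange cons in metis)
    ultimately show ?thesis by linarith
  qed
  have up: "b G \<le> min (min (CPr Pu (\<lambda>u. Yx x u = y) G) (CPr Pu (\<lambda>u. Yx x' u = y') G))
                  (min (CPr Pu (\<lambda>u. obs F u Y = y \<and> obs F u X = x) G
                          + CPr Pu (\<lambda>u. obs F u Y = y' \<and> obs F u X = x') G)
                       (CPr Pu (\<lambda>u. Yx x u = y) G - CPr Pu (\<lambda>u. Yx x' u = y) G
                          + CPr Pu (\<lambda>u. obs F u Y = y \<and> obs F u X = x') G
                          + CPr Pu (\<lambda>u. obs F u Y = y' \<and> obs F u X = x) G))" for G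
  proof -
    have "b G \<le> CPr Pu (\<lambda>u. Yx x u = y) G" unfolding b_def by (rule CPr_mono) auto
    moreover have "b G \<le> CPr Pu (\<lambda>u. Yx x' u = y') G" unfolding b_def by (rule CPr_mono) auto
    moreover have "b G \<le> CPr Pu (\<lambda>u. obs F u Y = y \<and> obs F u X = x) G
                          + CPr Pu (\<lambda>u. obs F u Y = y' \<and> obs F u X = x') G"
    proof -
      have "b G \<le> CPr Pu (\<lambda>u. obs F u Y = y \<and> obs F u X = x) G
                          + CPr Pu (\<lambda>u. obs F u Y = y' \<and> obs F u X = x') G"
        unfolding b_def by (rule CPr_sub) (use Xrange cons in metis)
      then show ?thesis .
    qed
    moreover have "b G + CPr Pu (\<lambda>u. Yx x' u = y) G \<le> CPr Pu (\<lambda>u. Yx x u = y) G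
                          + CPr Pu (\<lambda>u. obs F u Y = y \<and> obs F u X = x') G
                          + CPr Pu (\<lambda>u. obs F u Y = y' \<and> obs F u X = x) G"
    proof -
      have "CPr Pu (\<lambda>u. (Yx x u = y \<and> Yx x' u = y') \<or> Yx x' u = y) G = b G + CPr Pu (\<lambda>u. Yx x' u = y) G"
        unfolding b_def by (rule CPr_add) (use bin_y(1) in auto)
      moreover have "CPr Pu (\<lambda>u. (Yx x u = y \<and> Yx x' u = y') \<or> Yx x' u = y) G \<le> CPr Pu (\<lambda>u. Yx x u = y) G
                          + CPr Pu (\<lambda>u. obs F u Y = y \<and> obs F u X = x') G
                          + CPr Pu (\<lambda>u. obs F u Y = y' \<and> obs F u X = x) G"
        by (rule CPr_sub3) (use Yrange Xrange cons in metis)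
      ultimately show ?thesis by linarith
    qed
    ultimately show ?thesis by linarith
  qed
  have cpos: "Pr Pu cC > 0" using pos_c by (simp add: cC_def)
  have finZs: "finite Zs" by simp
  have decomp: "b cC = (\<Sum>z\<in>Zs. b (zc z) * wz z)"
  proof -
    let ?A = "\<lambda>u. Yx x u = y \<and> Yx x' u = y'"
    have "Pr Pu (\<lambda>u. ?A u \<and> cC u) = (\<Sum>z\<in>extensional Z. Pr Pu (\<lambda>u. (?A u \<and> cC u) \<and> restrict (obs F u) Z = (z::'v\<Rightarrow>'a)))"
      by (rule Pr_partition) auto
    also have "\<dots> = (\<Sum>z\<in>extensional Z. Pr Pu (\<lambda>u. ?A u \<and> zc z u))"
    proof (rule sum.cong[OF refl])
      fix z :: "'v \<Rightarrow> 'a" assume z: "z \<in> extensional Z"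
      have "\<And>u. (restrict (obs F u) Z = z) = agree (obs F u) Z z"
        using z unfolding agree_def by (auto simp: restrict_def extensional_def fun_eq_iff)
      then show "Pr Pu (\<lambda>u. (?A u \<and> cC u) \<and> restrict (obs F u) Z = z) = Pr Pu (\<lambda>u. ?A u \<and> zc z u)"
        unfolding zc_def cC_def by (metis (no_types, lifting))
    qed
    also have "\<dots> = (\<Sum>z\<in>Zs. Pr Pu (\<lambda>u. ?A u \<and> zc z u))"
    proof (rule sum.mono_neutral_right)
      show "finite (extensional Z :: ('v \<Rightarrow> 'a) set)" by simp
      show "Zs \<subseteq> extensional Z" by (auto simp: Zs_def)
      show "\<forall>z\<in>extensional Z - Zs. Pr Pu (\<lambda>u. ?A u \<and> zc z u) = 0"
      proof
        fix z :: "'v \<Rightarrow> 'a" assume "z \<in> extensional Z - Zs"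
        then have "\<not> CPr Pu (\<lambda>u. agree (obs F u) Z z) cC > 0" by (auto simp: Zs_def)
        then have "Pr Pu (zc z) \<le> 0" using cpos
          unfolding CPr_def zc_def cC_def by (simp add: divide_le_0_iff not_less)
        moreover have "Pr Pu (\<lambda>u. ?A u \<and> zc z u) \<le> Pr Pu (zc z)" by (rule Pr_mono) auto
        ultimately show "Pr Pu (\<lambda>u. ?A u \<and> zc z u) = 0" using Pr_nonneg[of Pu] by (meson order.antisym order.trans)
      qed
    qed
    finally have eq: "Pr Pu (\<lambda>u. ?A u \<and> cC u) = (\<Sum>z\<in>Zs. Pr Pu (\<lambda>u. ?A u \<and> zc z u))" .
    have tmq: "b (zc z) * wz z = Pr Pu (\<lambda>u. ?A u \<and> zc z u) / Pr Pu cC" if z: "z \<in> Zs" for z :: "'v \<Rightarrow> 'a"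
    proof -
      have "wz z = Pr Pu (zc z) / Pr Pu cC" unfolding wz_def CPr_def zc_def cC_def by simp
      moreover have "Pr Pu (zc z) > 0" using z cpos
        unfolding Zs_def CPr_def zc_def cC_def by (auto simp: zero_less_divide_iff)
      ultimately show ?thesis unfolding b_def CPr_def by simp
    qed
    have "b cC = Pr Pu (\<lambda>u. ?A u \<and> cC u) / Pr Pu cC" by (simp add: b_def CPr_def)
    also have "\<dots> = (\<Sum>z\<in>Zs. Pr Pu (\<lambda>u. ?A u \<and> zc z u) / Pr Pu cC)" unfolding eq by (simp add: sum_divide_distrib)
    also have "\<dots> = (\<Sum>z\<in>Zs. b (zc z) * wz z)" by (rule sum.cong) (simp_all add: tmq)
    finally show ?thesis .
  qed
  have wz_nonneg: "\<And>z. 0 \<le> wz z" by (simp add: wz_def CPr_nonneg)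
  have Lb: "L \<le> b cC"
    unfolding decomp L_def
    by (rule sum_mono) (unfold wz_def, rule mult_right_mono[OF low CPr_nonneg])
  have Ub: "b cC \<le> U"
    unfolding decomp U_def
    by (rule sum_mono) (unfold wz_def, rule mult_right_mono[OF up CPr_nonneg])
  have e1: "CPr Pu (\<lambda>u. Yx x u = y) cC = CPr Pu (\<lambda>u. Yx x u = y \<and> Yx x' u = y) cC + b cC"
    unfolding b_def by (rule CPr_add) (use Yrange bin_y(1) in metis)+
  have e2: "CPr Pu (\<lambda>u. Yx x' u = y) cC = CPr Pu (\<lambda>u. Yx x u = y \<and> Yx x' u = y) cC
              + CPr Pu (\<lambda>u. Yx x' u = y \<and> Yx x u = y') cC"
    by (rule CPr_add) (use Yrange bin_y(1) in metis)+
  have e3: "CPr Pu (\<lambda>u. Yx x' u = y') cC = b cC + CPr Pu (\<lambda>u. Yx x u = y' \<and> Yx x' u = y') cC"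
    unfolding b_def by (rule CPr_add) (use Yrange bin_y(1) in metis)+
  have fW: "f = W + \<sigma> * b cC"
    unfolding f_def W_def \<sigma>_def e1 e2 e3 by (simp add: b_def algebra_simps)
  show ?thesis
  proof (intro conjI impI)
    assume s: "\<sigma> < 0"
    show "W + \<sigma> * U \<le> f" unfolding fW using mult_left_mono_neg[OF Ub] s by simp
    show "f \<le> W + \<sigma> * L" unfolding fW using mult_left_mono_neg[OF Lb] s by simp
  next
    assume s: "\<sigma> > 0"
    show "W + \<sigma> * L \<le> f" unfolding fW using mult_left_mono[OF Lb] s by simp
    show "f \<le> W + \<sigma> * U" unfolding fW using mult_left_mono[OF Ub] s by simp
  qed
qed

end
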